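(* Let $\mathcal{N}\in\mathbb{C}^{n\times n}$ be Hermitian positive definite. Then $\Pi(P_\sharp,R_\sharp)=P_\sharp(R_\sharp^*AP_\sharp)^{-1}R_\sharp^*A$ is $\mathcal{N}$-orthogonal if and only if $V_r^*\mathcal{N}V_r$ is CF-block diagonal.
   Context: Let $A,M\in\mathbb{C}^{n\times n}$ be nonsingular with $M^{-1}A$ and $M^{-*}A^*$ diagonalizable. Let $V_r=[\bm v_{r,1},\dots,\bm v_{r,n}]$ and $V_l=[\bm v_{l,1},\dots,\bm v_{l,n}]$ be invertible matrices of right and left generalized eigenvectors of the pencil $(A,M)$, i.e. $AV_r=MV_r\Lambda$ and $V_l^*A=\Lambda V_l^*M$ with $\Lambda=\mathrm{diag}(\lambda_1,\dots,\lambda_n)$, chosen so that $V_l^*AV_r=D_a$ and $V_l^*MV_r=D_m$ are diagonal, and with the eigenvalues ordered so that $|1-\lambda_1|\ge\cdots\ge|1-\lambda_n|\ge0$. Fix $n_c\in\{1,\dots,n\}$, $n_f=n-n_c$. A matrix is CF-block diagonal if it is block diagonal with respect to the partition of indices into $\{1,\dots,n_c\}$ and $\{n_c+1,\dots,n\}$. $P_\sharp,R_\sharp\in\mathbb{C}^{n\times n_c}$ are any matrices with $\mathrm{range}(P_\sharp)=\mathrm{span}\{\bm v_{r,1},\dots,\bm v_{r,n_c}\}$ and $\mathrm{range}(R_\sharp)=\mathrm{span}\{\bm v_{l,1},\dots,\bm v_{l,n_c}\}$. For Hermitian positive definite $\mathcal{N}$, $\langle x,y\rangle_{\mathcal N}=y^*\mathcal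 N x$; a matrix $Z$ is $\mathcal N$-orthogonal if $\langle Zx,y\rangle_{\mathcal N}=\langle x,Zy\rangle_{\mathcal N}$ for all $x,y$. *)

theory Defs
  imports "Jordan_Normal_Form.Schur_Decomposition"
begin

(* conjugate transpose: mat_adjoint (from Schur_Decomposition); entry (i,j) = cnj (A $$ (j,i)) *)

(* the inverse of a square matrix (meaningful when it is invertible) *)
definition inv_mat :: "complex mat \<Rightarrow> complex mat" where
  "inv_mat B = (SOME C. C \<in> carrier_mat (dim_row B) (dim_row B) \<and> inverts_mat B C \<and> inverts_mat C B)"

definition diagonalizable_mat :: "complex mat \<Rightarrow> bool" where
  "diagonalizable_mat B \<longleftrightarrow> (\<exists>D. diagonal_mat D \<and> similar_mat B D)"

definition diag_of :: "nat \<Rightarrow> (nat \<Rightarrow> complex) \<Rightarrow> complex mat" where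
  "diag_of n lam = mat n n (\<lambda>(i,j). if i = j then lam i else 0)"

definition N_inner :: "complex mat \<Rightarrow> complex vec \<Rightarrow> complex vec \<Rightarrow> complex" where
  "N_inner N x y = conjugate y \<bullet> (N *\<^sub>v x)"

definition herm_pos_def :: "nat \<Rightarrow> complex mat \<Rightarrow> bool" where
  "herm_pos_def n N \<longleftrightarrow> N \<in> carrier_mat n n \<and> mat_adjoint N = N \<and>
     (\<forall>x \<in> carrier_vec n. x \<noteq> 0\<^sub>v n \<longrightarrow>
        Im (conjugate x \<bullet> (N *\<^sub>v x)) = 0 \<and> Re (conjugate x \<bullet> (N *\<^sub>v x)) > 0)"

definition N_orthogonal :: "nat \<Rightarrow> complex mat \<Rightarrow> complex mat \<Rightarrow> bool" where
  "N_orthogonal n N Z \<longleftrightarrow>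
     (\<forall>x \<in> carrier_vec n. \<forall>y \<in> carrier_vec n. N_inner N (Z *\<^sub>v x) y = N_inner N x (Z *\<^sub>v y))"

(* CF-block diagonal w.r.t. the partition {0..<nc}, {nc..<n} (0-based indices) *)
definition CF_block_diag :: "nat \<Rightarrow> nat \<Rightarrow> complex mat \<Rightarrow> bool" where
  "CF_block_diag n nc B \<longleftrightarrow> B \<in> carrier_mat n n \<and>
     (\<forall>i<n. \<forall>j<n. (i < nc) \<noteq> (j < nc) \<longrightarrow> B $$ (i,j) = 0)"

definition col_range :: "complex mat \<Rightarrow> complex vec set" where
  "col_range P = {P *\<^sub>v x | x. x \<in> carrier_vec (dim_col P)}"

definition first_cols_span :: "complex mat \<Rightarrow> nat \<Rightarrow> complex vec set" where
  "first_cols_span V k = {V *\<^sub>v y | y. y \<in> carrier_vec (dim_col V) \<and> (\<forall>i. k \<le> i \<longrightarrow> i < dim_col V \<longrightarrow> y $ i = 0)}"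

definition Pi_proj :: "complex mat \<Rightarrow> complex mat \<Rightarrow> complex mat \<Rightarrow> complex mat" where
  "Pi_proj A P R = P * inv_mat (mat_adjoint R * A * P) * mat_adjoint R * A"

end

theory Submission imports Defs begin


lemma adj_dims[simp]: "dim_row (mat_adjoint A) = dim_col A" "dim_col (mat_adjoint A) = dim_row A"
  unfolding mat_adjoint_def by auto

lemma adj_index[simp]: "i < dim_col A \<Longrightarrow> j < dim_row A \<Longrightarrow> mat_adjoint A $$ (i,j) = conjugate (A $$ (j,i))"
  unfolding mat_adjoint_def by (simp add: mat_of_rows_index)

lemma adj_carrier[simp]: "A \<in> carrier_mat n m \<Longrightarrow> mat_adjoint A \<in> carrier_mat m n"
  by (rule carrier_matI, auto)

lemma adj_adj[simp]: "mat_adjoint (mat_adjoint (A::complex mat)) = A"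
  by (rule eq_matI, simp_all)

lemma adj_mult: assumes "(A::complex mat) \<in> carrier_mat n m" "B \<in> carrier_mat m k"
  shows "mat_adjoint (A * B) = mat_adjoint B * mat_adjoint A"
proof (rule eq_matI)
  fix i j assume ij: "i < dim_row (mat_adjoint B * mat_adjoint A)" "j < dim_col (mat_adjoint B * mat_adjoint A)"
  hence i: "i < k" and j: "j < n" using assms by auto
  have "mat_adjoint (A * B) $$ (i,j) = conjugate (\<Sum>l\<in>{0..<m}. A $$ (j,l) * B $$ (l,i))"
    using assms i j by (simp add: scalar_prod_def)
  also have "\<dots> = (\<Sum>l\<in>{0..<m}. conjugate (B $$ (l,i)) * conjugate (A $$ (j,l)))"
    by (simp add: sum_conjugate conjugate_dist_mul mult.commute)
  also have "\<dots> = (mat_adjoint B * mat_adjoint A) $$ (i,j)"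
    using assms i j by (simp add: scalar_prod_def)
  finally show "mat_adjoint (A * B) $$ (i,j) = (mat_adjoint B * mat_adjoint A) $$ (i,j)" .
qed (insert assms, auto)

lemma adj_one[simp]: "mat_adjoint (1\<^sub>m n :: complex mat) = 1\<^sub>m n"
  by (rule eq_matI, simp_all)

lemma assoc': assumes "dim_col A = dim_row B" "dim_col B = dim_row C"
  shows "(A::complex mat) * B * C = A * (B * C)"
proof -
  have a: "A \<in> carrier_mat (dim_row A) (dim_row B)" using assms(1) by (intro carrier_matI, auto)
  have b: "B \<in> carrier_mat (dim_row B) (dim_row C)" using assms(2) by (intro carrier_matI, auto)
  have c: "C \<in> carrier_mat (dim_row C) (dim_col C)" by (intro carrier_matI, auto)
  show ?thesis by (rule assoc_mult_mat[OF a b c])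
qed

lemma inv_mat_props: assumes B: "B \<in> carrier_mat n n" and inv: "invertible_mat B"
  shows "inv_mat B \<in> carrier_mat n n" "B * inv_mat B = 1\<^sub>m n" "inv_mat B * B = 1\<^sub>m n"
proof -
  from inv obtain C where C: "inverts_mat B C" "inverts_mat C B" unfolding invertible_mat_def by auto
  have BC: "B * C = 1\<^sub>m n" and CB: "C * B = 1\<^sub>m (dim_row C)" using C B unfolding inverts_mat_def by auto
  have c1: "dim_col C = n" using arg_cong[OF BC, of dim_col] B by simp
  have c2: "dim_row C = n" using arg_cong[OF CB, of dim_col] B by simp
  have Cc: "C \<in> carrier_mat n n" using c1 c2 by (intro carrier_matI, auto)
  have dB: "dim_row B = n" using B by (rule carrier_matD)
  have ex: "\<exists>C. C \<in> carrier_mat (dim_row B) (dim_row B) \<and> inverts_mat B C \<and> inverts_mat C B"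
    unfolding dB using C Cc by blast
  have "inv_mat B \<in> carrier_mat (dim_row B) (dim_row B) \<and> inverts_mat B (inv_mat B) \<and> inverts_mat (inv_mat B) B"
    unfolding inv_mat_def by (rule someI_ex[OF ex])
  hence "inv_mat B \<in> carrier_mat n n \<and> B * inv_mat B = 1\<^sub>m n \<and> inv_mat B * B = 1\<^sub>m (dim_row (inv_mat B))"
    unfolding dB inverts_mat_def by (simp only: dB)
  moreover have "dim_row (inv_mat B) = n" using calculation carrier_matD(1) by blast
  ultimately have "inv_mat B \<in> carrier_mat n n \<and> B * inv_mat B = 1\<^sub>m n \<and> inv_mat B * B = 1\<^sub>m n"
    by simp
  thus "inv_mat B \<in> carrier_mat n n" "B * inv_mat B = 1\<^sub>m n" "inv_mat B * B = 1\<^sub>m n"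
    by auto
qed

lemma invertibleI: assumes "(B::complex mat) \<in> carrier_mat n n" "C \<in> carrier_mat n n" "B * C = 1\<^sub>m n"
  shows "invertible_mat B"
  using assms mat_mult_left_right_inverse[OF assms] unfolding invertible_mat_def inverts_mat_def
  by (auto simp: square_mat.simps)



definition Ec :: "nat \<Rightarrow> nat \<Rightarrow> complex mat" where
  "Ec n nc = diag_of n (\<lambda>i. if i < nc then 1 else 0)"

lemma diag_of_carrier[simp]: "diag_of n d \<in> carrier_mat n n"
  and diag_of_dims[simp]: "dim_row (diag_of n d) = n" "dim_col (diag_of n d) = n"
  by (auto simp: diag_of_def)

lemma diag_of_index[simp]: "i < n \<Longrightarrow> j < n \<Longrightarrow> diag_of n d $$ (i,j) = (if i = j then d i else 0)"
  by (simp add: diag_of_def)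

lemma mult_diag_right: assumes "B \<in> carrier_mat m n" "i < m" "j < n"
  shows "(B * diag_of n d) $$ (i,j) = B $$ (i,j) * d j"
proof -
  have "(B * diag_of n d) $$ (i,j) = (\<Sum>k\<in>{0..<n}. B $$ (i,k) * (if k = j then d k else 0))"
    using assms by (simp add: scalar_prod_def)
  also have "\<dots> = (\<Sum>k\<in>{0..<n}. if k = j then B $$ (i,k) * d k else 0)"
    by (rule sum.cong, auto)
  also have "\<dots> = B $$ (i,j) * d j" using assms by (simp add: sum.delta')
  finally show ?thesis .
qed

lemma mult_diag_left: assumes "B \<in> carrier_mat n m" "i < n" "j < m"
  shows "(diag_of n d * B) $$ (i,j) = d i * B $$ (i,j)"
proof -
  have "(diag_of n d * B) $$ (i,j) = (\<Sum>k\<in>{0..<n}. (if i = k then d i else 0) * B $$ (k,j))"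
    using assms by (simp add: scalar_prod_def)
  also have "\<dots> = (\<Sum>k\<in>{0..<n}. if i = k then d i * B $$ (k,j) else 0)"
    by (rule sum.cong, auto)
  also have "\<dots> = d i * B $$ (i,j)" using assms by (simp add: sum.delta)
  finally show ?thesis .
qed

lemma Ec_adj: "mat_adjoint (Ec n nc) = Ec n nc"
  by (rule eq_matI, auto simp: Ec_def)

lemma mult_vec_unit: assumes "(Q::complex mat) \<in> carrier_mat n m" "j < m"
  shows "Q *\<^sub>v unit_vec m j = col Q j"
  by (rule eq_vecI, insert assms, auto)

lemma inj_mult_vec: assumes V: "(V::complex mat) \<in> carrier_mat n n" "invertible_mat V"
  and a: "a \<in> carrier_vec n" and b: "b \<in> carrier_vec n" and eq: "V *\<^sub>v a = V *\<^sub>v b"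
  shows "a = b"
proof -
  note I = inv_mat_props[OF V]
  have e: "inv_mat V *\<^sub>v (V *\<^sub>v c) = c" if c: "c \<in> carrier_vec n" for c
  proof -
    have "inv_mat V *\<^sub>v (V *\<^sub>v c) = (inv_mat V * V) *\<^sub>v c"
      by (rule assoc_mult_mat_vec[symmetric, OF I(1) V(1) c])
    also have "\<dots> = c" unfolding I(3) using c by simp
    finally show ?thesis .
  qed
  show ?thesis using e[OF a] e[OF b] eq by metis
qed

lemma factor: assumes V: "(V::complex mat) \<in> carrier_mat n n" "invertible_mat V"
  and Q: "Q \<in> carrier_mat n nc" and rng: "col_range Q = first_cols_span V nc" and ncn: "nc \<le> n"
  shows "\<exists>X X'. X \<in> carrier_mat n nc \<and> X' \<in> carrier_mat nc n \<and> Q = V * X \<and>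
     (\<forall>i<n. \<forall>j<nc. nc \<le> i \<longrightarrow> X $$ (i,j) = 0) \<and> X * X' = Ec n nc"
proof -
  have "\<forall>j. \<exists>y. j < nc \<longrightarrow> y \<in> carrier_vec n \<and> (\<forall>i. nc \<le> i \<longrightarrow> i < n \<longrightarrow> y $ i = 0) \<and> col Q j = V *\<^sub>v y"
  proof (intro allI impI)
    fix j
    show "\<exists>y. j < nc \<longrightarrow> y \<in> carrier_vec n \<and> (\<forall>i. nc \<le> i \<longrightarrow> i < n \<longrightarrow> y $ i = 0) \<and> col Q j = V *\<^sub>v y"
    proof (cases "j < nc")
      case True
      have "col Q j \<in> col_range Q" unfolding col_range_def
        using mult_vec_unit[OF Q True] Q by (auto intro!: exI[of _ "unit_vec nc j"])
      thus ?thesis unfolding rng first_cols_span_def using V by auto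
    qed auto
  qed
  from choice[OF this] obtain yf where yf': "\<forall>j. j < nc \<longrightarrow> yf j \<in> carrier_vec n \<and> (\<forall>i. nc \<le> i \<longrightarrow> i < n \<longrightarrow> yf j $ i = 0) \<and> col Q j = V *\<^sub>v yf j"
    by blast
  note yf = yf'[rule_format]
  define X where "X = mat n nc (\<lambda>(i,j). yf j $ i)"
  have Xc: "X \<in> carrier_mat n nc" unfolding X_def by simp
  have colX: "col X j = yf j" if "j < nc" for j
    using yf[OF that] that unfolding X_def by (auto intro!: eq_vecI)
  have QVX: "Q = V * X"
    by (rule mat_col_eqI, insert Q V Xc colX yf, auto)
  have X0: "\<forall>i<n. \<forall>j<nc. nc \<le> i \<longrightarrow> X $$ (i,j) = 0" using yf unfolding X_def by auto
  have "\<forall>i. \<exists>x. i < nc \<longrightarrow> x \<in> carrier_vec nc \<and> Q *\<^sub>v x = V *\<^sub>v unit_vec n i"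
  proof (intro allI)
    fix i
    show "\<exists>x. i < nc \<longrightarrow> x \<in> carrier_vec nc \<and> Q *\<^sub>v x = V *\<^sub>v unit_vec n i"
    proof (cases "i < nc")
      case True
      have "V *\<^sub>v unit_vec n i \<in> first_cols_span V nc" unfolding first_cols_span_def
        using V True by (auto intro!: exI[of _ "unit_vec n i"])
      thus ?thesis unfolding rng[symmetric] col_range_def using Q by auto
    qed auto
  qed
  from choice[OF this] obtain xf where xf': "\<forall>i. i < nc \<longrightarrow> xf i \<in> carrier_vec nc \<and> Q *\<^sub>v xf i = V *\<^sub>v unit_vec n i"
    by blast
  note xf = xf'[rule_format]
  define X' where "X' = mat nc n (\<lambda>(k,i). if i < nc then xf i $ k else 0)"
  have X'c: "X' \<in> carrier_mat nc n" unfolding X'_def by simp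
  have Xxf: "X *\<^sub>v xf i = unit_vec n i" if i: "i < nc" for i
  proof (rule inj_mult_vec[OF V])
    show "X *\<^sub>v xf i \<in> carrier_vec n" using Xc by (intro carrier_vecI, auto)
    show "unit_vec n i \<in> carrier_vec n" by simp
    have "V *\<^sub>v (X *\<^sub>v xf i) = (V * X) *\<^sub>v xf i"
      using assoc_mult_mat_vec[OF V(1) Xc, of "xf i"] xf[OF i] by simp
    hence "V *\<^sub>v (X *\<^sub>v xf i) = Q *\<^sub>v xf i" unfolding QVX .
    thus "V *\<^sub>v (X *\<^sub>v xf i) = V *\<^sub>v unit_vec n i" using xf[OF i] by simp
  qed
  have XX': "X * X' = Ec n nc"
  proof (rule mat_col_eqI)
    show "dim_row (X * X') = dim_row (Ec n nc)" "dim_col (X * X') = dim_col (Ec n nc)"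
      using Xc X'c by (auto simp: Ec_def)
    fix i assume "i < dim_col (Ec n nc)"
    hence i: "i < n" by (simp add: Ec_def)
    have cE: "col (Ec n nc) i = (if i < nc then unit_vec n i else 0\<^sub>v n)"
      using i by (auto simp: Ec_def intro!: eq_vecI)
    have "col (X * X') i = X *\<^sub>v col X' i" by (rule col_mult2[OF Xc X'c i])
    also have "col X' i = (if i < nc then xf i else 0\<^sub>v nc)"
    proof (cases "i < nc")
      case True
      hence d: "dim_vec (xf i) = nc" using xf[OF True] carrier_vecD by blast
      show ?thesis by (rule eq_vecI, insert i True d, auto simp: X'_def)
    next
      case False
      show ?thesis by (rule eq_vecI, insert i False, auto simp: X'_def)
    qed
    finally show "col (X * X') i = col (Ec n nc) i" using cE Xxf Xc by auto
  qed
  show ?thesis using Xc X'c QVX X0 XX' by blast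
qed

lemma top_inv: assumes X: "X \<in> carrier_mat n nc" and X': "X' \<in> carrier_mat nc n" and ncn: "nc \<le> n"
  and X0: "\<forall>i<n. \<forall>j<nc. nc \<le> i \<longrightarrow> X $$ (i,j) = 0" and XX': "X * X' = Ec n nc"
  shows "X' * X = 1\<^sub>m nc"
proof -
  define Xc where "Xc = mat nc nc (\<lambda>(i,j). X $$ (i,j))"
  define X'c where "X'c = mat nc nc (\<lambda>(i,j). X' $$ (i,j))"
  have "Xc * X'c = 1\<^sub>m nc"
  proof (rule eq_matI)
    fix i j assume ij: "i < dim_row (1\<^sub>m nc)" "j < dim_col (1\<^sub>m nc)"
    hence ij': "i < nc" "j < nc" by auto
    have "(Xc * X'c) $$ (i,j) = (\<Sum>k\<in>{0..<nc}. X $$ (i,k) * X' $$ (k,j))"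
      using ij' unfolding Xc_def X'c_def by (simp add: scalar_prod_def)
    also have "\<dots> = (X * X') $$ (i,j)" using ij' ncn X X' by (simp add: scalar_prod_def)
    also have "\<dots> = 1\<^sub>m nc $$ (i,j)" using ij' ncn unfolding XX' by (simp add: Ec_def)
    finally show "(Xc * X'c) $$ (i,j) = 1\<^sub>m nc $$ (i,j)" .
  qed (auto simp: Xc_def X'c_def)
  hence inv: "X'c * Xc = 1\<^sub>m nc"
    by (rule mat_mult_left_right_inverse[rotated 2], auto simp: Xc_def X'c_def)
  show ?thesis
  proof (rule eq_matI)
    fix i j assume ij: "i < dim_row (1\<^sub>m nc)" "j < dim_col (1\<^sub>m nc)"
    hence ij': "i < nc" "j < nc" by auto
    have "(X' * X) $$ (i,j) = (\<Sum>k\<in>{0..<n}. X' $$ (i,k) * X $$ (k,j))"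
      using ij' X X' by (simp add: scalar_prod_def)
    also have "\<dots> = (\<Sum>k\<in>{0..<nc}. X' $$ (i,k) * X $$ (k,j))"
      by (rule sum.mono_neutral_right, insert ncn X0 ij', auto)
    also have "\<dots> = (X'c * Xc) $$ (i,j)"
      using ij' unfolding Xc_def X'c_def by (simp add: scalar_prod_def)
    finally show "(X' * X) $$ (i,j) = 1\<^sub>m nc $$ (i,j)" using inv by simp
  qed (insert X X', auto)
qed

lemma EX_eq: assumes X: "X \<in> carrier_mat n nc" and X0: "\<forall>i<n. \<forall>j<nc. nc \<le> i \<longrightarrow> X $$ (i,j) = 0"
  shows "Ec n nc * X = X"
proof (rule eq_matI)
  fix i j assume "i < dim_row X" "j < dim_col X"
  hence ij: "i < n" "j < nc" using X by auto
  have "(Ec n nc * X) $$ (i,j) = (if i < nc then 1 else 0) * X $$ (i,j)"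
    unfolding Ec_def by (rule mult_diag_left[OF X ij])
  thus "(Ec n nc * X) $$ (i,j) = X $$ (i,j)" using X0 ij by auto
qed (insert X, auto simp: Ec_def)



lemma mult_assoc_rule: "A * B = C \<Longrightarrow> dim_col A = dim_row B \<Longrightarrow> dim_col B = dim_row K \<Longrightarrow>
   (A::complex mat) * (B * K) = C * K"
  using assoc'[of A B K] by simp

lemma mult_one_r: assumes "dim_col A = k" shows "(A::complex mat) * 1\<^sub>m k = A"
proof -
  have "A \<in> carrier_mat (dim_row A) k" using assms by (intro carrier_matI, auto)
  thus ?thesis by (rule right_mult_one_mat)
qed

lemma mult_one_l: assumes "dim_row A = k" shows "1\<^sub>m k * (A::complex mat) = A"
proof -
  have "A \<in> carrier_mat k (dim_col A)" using assms by (intro carrier_matI, auto)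
  thus ?thesis by (rule left_mult_one_mat)
qed

lemma conj_unit: "conjugate (unit_vec n i :: complex vec) = unit_vec n i"
  by (rule eq_vecI, auto simp: unit_vec_def)

lemma adj_vec: assumes Z: "(Z::complex mat) \<in> carrier_mat n n" and y: "y \<in> carrier_vec n" and w: "w \<in> carrier_vec n"
  shows "conjugate (Z *\<^sub>v y) \<bullet> w = conjugate y \<bullet> (mat_adjoint Z *\<^sub>v w)"
proof -
  have "conjugate (Z *\<^sub>v y) \<bullet> w = (\<Sum>i\<in>{0..<n}. (\<Sum>k\<in>{0..<n}. conjugate (Z $$ (i,k)) * conjugate (y $ k)) * w $ i)"
    using Z y w by (simp add: scalar_prod_def sum_conjugate conjugate_dist_mul)
  also have "\<dots> = (\<Sum>i\<in>{0..<n}. \<Sum>k\<in>{0..<n}. conjugate (y $ k) * (conjugate (Z $$ (i,k)) * w $ i))"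
    by (simp add: sum_distrib_left sum_distrib_right mult_ac)
  also have "\<dots> = (\<Sum>k\<in>{0..<n}. \<Sum>i\<in>{0..<n}. conjugate (y $ k) * (conjugate (Z $$ (i,k)) * w $ i))"
    by (rule sum.swap)
  also have "\<dots> = conjugate y \<bullet> (mat_adjoint Z *\<^sub>v w)"
    using Z y w by (simp add: scalar_prod_def sum_distrib_left)
  finally show ?thesis .
qed

lemma northo_iff: assumes N: "N \<in> carrier_mat n n" "mat_adjoint N = N" and Z: "Z \<in> carrier_mat n n"
  shows "N_orthogonal n N Z \<longleftrightarrow> mat_adjoint Z * N = N * Z"
proof -
  have L: "N_inner N (Z *\<^sub>v x) y = conjugate y \<bullet> ((N * Z) *\<^sub>v x)" if "x \<in> carrier_vec n" "y \<in> carrier_vec n" for x y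
    unfolding N_inner_def using that N Z by (simp add: assoc_mult_mat_vec)
  have R: "N_inner N x (Z *\<^sub>v y) = conjugate y \<bullet> ((mat_adjoint Z * N) *\<^sub>v x)" if "x \<in> carrier_vec n" "y \<in> carrier_vec n" for x y
    unfolding N_inner_def using that N Z assoc_mult_mat_vec[OF adj_carrier[OF Z] N(1) that(1)] by (simp add: adj_vec)
  have E: "conjugate (unit_vec n i) \<bullet> (K *\<^sub>v unit_vec n j) = K $$ (i,j)" if "(K::complex mat) \<in> carrier_mat n n" "i < n" "j < n" for K i j
    using that by (simp add: conj_unit)
  show ?thesis
  proof
    assume H: "N_orthogonal n N Z"
    show "mat_adjoint Z * N = N * Z"
    proof (rule eq_matI)
      fix i j assume "i < dim_row (N * Z)" "j < dim_col (N * Z)"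
      hence ij: "i < n" "j < n" using N Z by auto
      have "N_inner N (Z *\<^sub>v unit_vec n j) (unit_vec n i) = N_inner N (unit_vec n j) (Z *\<^sub>v unit_vec n i)"
        using H ij unfolding N_orthogonal_def by auto
      moreover have "N_inner N (Z *\<^sub>v unit_vec n j) (unit_vec n i) = (N * Z) $$ (i,j)"
        unfolding L[OF unit_vec_carrier unit_vec_carrier] by (rule E, insert N Z ij, auto)
      moreover have "N_inner N (unit_vec n j) (Z *\<^sub>v unit_vec n i) = (mat_adjoint Z * N) $$ (i,j)"
        unfolding R[OF unit_vec_carrier unit_vec_carrier] by (rule E, insert N Z ij, auto)
      ultimately show "(mat_adjoint Z * N) $$ (i,j) = (N * Z) $$ (i,j)" by simp
    qed (insert N Z, auto)
  next
    assume H: "mat_adjoint Z * N = N * Z"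
    show "N_orthogonal n N Z" unfolding N_orthogonal_def using L R H by simp
  qed
qed

lemma comm_E_iff: assumes B: "B \<in> carrier_mat n n"
  shows "Ec n nc * B = B * Ec n nc \<longleftrightarrow> CF_block_diag n nc B"
proof
  assume H: "Ec n nc * B = B * Ec n nc"
  have "B $$ (i,j) = 0" if "i < n" "j < n" "(i < nc) \<noteq> (j < nc)" for i j
  proof -
    have "(Ec n nc * B) $$ (i,j) = (B * Ec n nc) $$ (i,j)" using H by simp
    moreover have "(Ec n nc * B) $$ (i,j) = (if i < nc then 1 else 0) * B $$ (i,j)"
      unfolding Ec_def by (rule mult_diag_left[OF B that(1,2)])
    moreover have "(B * Ec n nc) $$ (i,j) = B $$ (i,j) * (if j < nc then 1 else 0)"
      unfolding Ec_def by (rule mult_diag_right[OF B that(1,2)])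
    ultimately show ?thesis using that by auto
  qed
  thus "CF_block_diag n nc B" unfolding CF_block_diag_def using B by auto
next
  assume "CF_block_diag n nc B"
  hence Z: "\<And>i j. i < n \<Longrightarrow> j < n \<Longrightarrow> (i < nc) \<noteq> (j < nc) \<Longrightarrow> B $$ (i,j) = 0"
    unfolding CF_block_diag_def by auto
  show "Ec n nc * B = B * Ec n nc"
  proof (rule eq_matI)
    fix i j assume "i < dim_row (B * Ec n nc)" "j < dim_col (B * Ec n nc)"
    hence ij: "i < n" "j < n" using B by (auto simp: Ec_def)
    have "(Ec n nc * B) $$ (i,j) = (if i < nc then 1 else 0) * B $$ (i,j)"
      unfolding Ec_def by (rule mult_diag_left[OF B ij])
    moreover have "(B * Ec n nc) $$ (i,j) = B $$ (i,j) * (if j < nc then 1 else 0)"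
      unfolding Ec_def by (rule mult_diag_right[OF B ij])
    ultimately show "(Ec n nc * B) $$ (i,j) = (B * Ec n nc) $$ (i,j)" using Z[OF ij] by auto
  qed (insert B, auto simp: Ec_def)
qed

lemma diag_comm: assumes D: "D \<in> carrier_mat n n" "diagonal_mat D"
  shows "D * Ec n nc = Ec n nc * D"
proof (rule eq_matI)
  fix i j assume "i < dim_row (Ec n nc * D)" "j < dim_col (Ec n nc * D)"
  hence ij: "i < n" "j < n" using D by (auto simp: Ec_def)
  have Z: "i \<noteq> j \<Longrightarrow> D $$ (i,j) = 0" using D ij unfolding diagonal_mat_def by auto
  have "(Ec n nc * D) $$ (i,j) = (if i < nc then 1 else 0) * D $$ (i,j)"
    unfolding Ec_def by (rule mult_diag_left[OF D(1) ij])
  moreover have "(D * Ec n nc) $$ (i,j) = D $$ (i,j) * (if j < nc then 1 else 0)"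
    unfolding Ec_def by (rule mult_diag_right[OF D(1) ij])
  ultimately show "(D * Ec n nc) $$ (i,j) = (Ec n nc * D) $$ (i,j)" using Z by (cases "i = j", auto)
qed (insert D, auto simp: Ec_def)



theorem lemma3p2:
  fixes n nc :: nat
    and A M Vr Vl N P R :: "complex mat"
    and lam :: "nat \<Rightarrow> complex"
  assumes A: "A \<in> carrier_mat n n" and M: "M \<in> carrier_mat n n"
    and A_inv: "invertible_mat A" and M_inv: "invertible_mat M"
    and diag1: "diagonalizable_mat (inv_mat M * A)"
    and diag2: "diagonalizable_mat (inv_mat (mat_adjoint M) * mat_adjoint A)"
    and Vr: "Vr \<in> carrier_mat n n" and Vr_inv: "invertible_mat Vr"
    and Vl: "Vl \<in> carrier_mat n n" and Vl_inv: "invertible_mat Vl"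
    and right_eig: "A * Vr = M * Vr * diag_of n lam"
    and left_eig: "mat_adjoint Vl * A = diag_of n lam * mat_adjoint Vl * M"
    and Da: "diagonal_mat (mat_adjoint Vl * A * Vr)"
    and Dm: "diagonal_mat (mat_adjoint Vl * M * Vr)"
    and order: "\<forall>i j. i \<le> j \<longrightarrow> j < n \<longrightarrow> cmod (1 - lam j) \<le> cmod (1 - lam i)"
    and nc: "1 \<le> nc" "nc \<le> n"
    and P: "P \<in> carrier_mat n nc" and R: "R \<in> carrier_mat n nc"
    and rangeP: "col_range P = first_cols_span Vr nc"
    and rangeR: "col_range R = first_cols_span Vl nc"
    and N: "herm_pos_def n N"
  shows "N_orthogonal n N (Pi_proj A P R) \<longleftrightarrow> CF_block_diag n nc (mat_adjoint Vr * N * Vr)"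
proof -
  define E where "E = Ec n nc"
  have Ec: "E \<in> carrier_mat n n" unfolding E_def Ec_def by simp
  have Eadj: "mat_adjoint E = E" unfolding E_def by (rule Ec_adj)
  obtain X X' where X: "X \<in> carrier_mat n nc" "X' \<in> carrier_mat nc n" "P = Vr * X"
     "\<forall>i<n. \<forall>j<nc. nc \<le> i \<longrightarrow> X $$ (i,j) = 0" "X * X' = E"
    using factor[OF Vr Vr_inv P rangeP nc(2)] unfolding E_def by blast
  obtain Y Y' where Y: "Y \<in> carrier_mat n nc" "Y' \<in> carrier_mat nc n" "R = Vl * Y"
     "\<forall>i<n. \<forall>j<nc. nc \<le> i \<longrightarrow> Y $$ (i,j) = 0" "Y * Y' = E"
    using factor[OF Vl Vl_inv R rangeR nc(2)] unfolding E_def by blast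
  have XX: "X' * X = 1\<^sub>m nc" using top_inv[OF X(1,2) nc(2) X(4)] X(5) E_def by simp
  have YY: "Y' * Y = 1\<^sub>m nc" using top_inv[OF Y(1,2) nc(2) Y(4)] Y(5) E_def by simp
  have EY: "E * Y = Y" using EX_eq[OF Y(1) Y(4)] E_def by simp
  have YE: "mat_adjoint Y * E = mat_adjoint Y"
    using adj_mult[OF Ec Y(1)] EY Eadj by simp
  define Da where "Da = mat_adjoint Vl * A * Vr"
  note IVr = inv_mat_props[OF Vr Vr_inv]
  note IVl = inv_mat_props[OF Vl Vl_inv]
  note IA = inv_mat_props[OF A A_inv]
  define W where "W = inv_mat Vr"
  have Wc: "W \<in> carrier_mat n n" and VrW: "Vr * W = 1\<^sub>m n" and WVr: "W * Vr = 1\<^sub>m n"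
    using IVr W_def by auto
  define IL where "IL = mat_adjoint (inv_mat Vl)"
  have ILc: "IL \<in> carrier_mat n n" using IVl IL_def by simp
  have adjVl_inv: "mat_adjoint Vl * IL = 1\<^sub>m n"
    using adj_mult[OF IVl(1) Vl] IVl(3) IL_def by simp
  define IAm where "IAm = inv_mat A"
  have IAc: "IAm \<in> carrier_mat n n" and AIA: "A * IAm = 1\<^sub>m n" using IA IAm_def by auto
  note dims = carrier_matD[OF A] carrier_matD[OF Vr] carrier_matD[OF Vl] carrier_matD[OF Ec]
    carrier_matD[OF X(1)] carrier_matD[OF X(2)] carrier_matD[OF Y(1)] carrier_matD[OF Y(2)]
    carrier_matD[OF Wc] carrier_matD[OF ILc] carrier_matD[OF IAc] carrier_matD[OF P] carrier_matD[OF R]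
  have Dac: "Da \<in> carrier_mat n n" using adj_carrier[OF Vl] A Vr Da_def by simp
  have DaDi: "Da * (W * IAm * IL) = 1\<^sub>m n"
    unfolding Da_def using dims
    by (simp add: assoc' mult_assoc_rule[OF VrW] mult_assoc_rule[OF AIA] adjVl_inv mult_one_l)
  have Dainv: "invertible_mat Da"
    by (rule invertibleI[OF Dac _ DaDi], insert Wc IAc ILc, simp)
  note IDa = inv_mat_props[OF Dac Dainv]
  define Z where "Z = inv_mat Da"
  have Zc: "Z \<in> carrier_mat n n" and DaZ: "Da * Z = 1\<^sub>m n" using IDa Z_def by auto
  have DE: "Da * E = E * Da" using diag_comm[OF Dac Da[folded Da_def]] E_def by simp
  note dims2 = dims carrier_matD[OF Dac] carrier_matD[OF Zc]
  have G: "mat_adjoint R * A * P = mat_adjoint Y * Da * X"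
    unfolding Da_def using X(3) Y(3) adj_mult[OF Vl Y(1)] dims by (simp add: assoc')
  define G where "G = mat_adjoint Y * Da * X"
  have Gc: "G \<in> carrier_mat nc nc" unfolding G_def
    by (rule mult_carrier_mat[OF mult_carrier_mat[OF adj_carrier[OF Y(1)] Dac] X(1)])
  have adjYY: "mat_adjoint Y * mat_adjoint Y' = 1\<^sub>m nc"
    using adj_mult[OF Y(2) Y(1)] YY by simp
  have GH: "G * (X' * Z * mat_adjoint Y') = 1\<^sub>m nc"
  proof -
    have "G * (X' * Z * mat_adjoint Y') = mat_adjoint Y * (Da * (X * X') * Z * mat_adjoint Y')"
      unfolding G_def using dims2 by (simp add: assoc')
    also have "\<dots> = mat_adjoint Y * (E * (Da * Z) * mat_adjoint Y')"
      unfolding X(5) using dims2 by (simp add: assoc' mult_assoc_rule[OF DE])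
    also have "\<dots> = mat_adjoint Y * E * mat_adjoint Y'"
      unfolding DaZ using dims2 by (simp add: assoc' mult_one_r)
    also have "\<dots> = 1\<^sub>m nc" unfolding YE adjYY ..
    finally show ?thesis .
  qed
  have Ginv: "invertible_mat G"
    by (rule invertibleI[OF Gc mult_carrier_mat[OF mult_carrier_mat[OF X(2) Zc] adj_carrier[OF Y(2)]] GH])
  define C where "C = inv_mat G"
  have Cc: "C \<in> carrier_mat nc nc" and CG: "C * G = 1\<^sub>m nc" using inv_mat_props[OF Gc Ginv] C_def by auto
  define Pi where "Pi = Pi_proj A P R"
  have Pi_def': "Pi = P * C * mat_adjoint R * A" unfolding Pi_def Pi_proj_def C_def G_def G ..
  have Pic: "Pi \<in> carrier_mat n n" unfolding Pi_def'
    by (rule mult_carrier_mat[OF mult_carrier_mat[OF mult_carrier_mat[OF P Cc] adj_carrier[OF R]] A])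
  note dims3 = dims2 carrier_matD[OF Cc] carrier_matD[OF Pic] carrier_matD[OF Gc]
  have F1: "mat_adjoint R * A * Vr = G * X'"
  proof -
    have "mat_adjoint R * A * Vr = mat_adjoint Y * Da"
      unfolding Da_def using Y(3) adj_mult[OF Vl Y(1)] dims by (simp add: assoc')
    also have "\<dots> = mat_adjoint Y * E * Da" using YE by simp
    also have "\<dots> = mat_adjoint Y * (Da * E)" unfolding DE using dims3 by (simp add: assoc')
    also have "\<dots> = G * X'" unfolding G_def X(5)[symmetric] using dims3 by (simp add: assoc')
    finally show ?thesis .
  qed
  have PiVr: "Pi * Vr = Vr * E"
  proof -
    have "Pi * Vr = P * C * (mat_adjoint R * A * Vr)" unfolding Pi_def' using dims3 by (simp add: assoc')
    also have "\<dots> = P * (C * G) * X'" unfolding F1 using dims3 by (simp add: assoc')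
    also have "\<dots> = Vr * (X * X')" unfolding CG X(3) using dims3 by (simp add: assoc' mult_one_r)
    finally show ?thesis unfolding X(5) .
  qed
  have PiE: "Pi = Vr * E * W"
  proof -
    have "Pi = Pi * (Vr * W)" unfolding VrW using dims3 by (simp add: mult_one_r)
    also have "\<dots> = Pi * Vr * W" using dims3 by (simp add: assoc')
    finally show ?thesis unfolding PiVr .
  qed
  define B where "B = mat_adjoint Vr * N * Vr"
  have Nc: "N \<in> carrier_mat n n" and Nadj: "mat_adjoint N = N" using N unfolding herm_pos_def_def by auto
  have Bc: "B \<in> carrier_mat n n" unfolding B_def
    by (rule mult_carrier_mat[OF mult_carrier_mat[OF adj_carrier[OF Vr] Nc] Vr])
  note dims4 = dims3 carrier_matD[OF Nc]
  have adjVrE: "mat_adjoint (Vr * E) = E * mat_adjoint Vr" using adj_mult[OF Vr Ec] Eadj by simp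
  have adjPi: "mat_adjoint Pi = mat_adjoint W * E * mat_adjoint Vr"
    unfolding PiE using adj_mult[OF _ Wc, of "Vr * E" n] adjVrE Vr Ec dims4 by (simp add: assoc')
  have adjVrW: "mat_adjoint W * mat_adjoint Vr = 1\<^sub>m n" using adj_mult[OF Vr Wc] VrW by simp
  have mid: "mat_adjoint Pi * N = N * Pi \<longleftrightarrow> E * B = B * E"
  proof
    assume H: "mat_adjoint Pi * N = N * Pi"
    have "E * B = mat_adjoint (Vr * E) * N * Vr" unfolding adjVrE B_def using dims4 by (simp add: assoc')
    also have "\<dots> = mat_adjoint Vr * (mat_adjoint Pi * N) * Vr"
      unfolding PiVr[symmetric] using adj_mult[OF Pic Vr] dims4 by (simp add: assoc')
    also have "\<dots> = mat_adjoint Vr * N * (Pi * Vr)" unfolding H using dims4 by (simp add: assoc')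
    also have "\<dots> = B * E" unfolding PiVr B_def using dims4 by (simp add: assoc')
    finally show "E * B = B * E" .
  next
    assume H: "E * B = B * E"
    have "mat_adjoint Pi * N = mat_adjoint W * E * mat_adjoint Vr * N * (Vr * W)"
      unfolding adjPi VrW using dims4 by (simp add: mult_one_r)
    also have "\<dots> = mat_adjoint W * (E * B) * W" unfolding B_def using dims4 by (simp add: assoc')
    also have "\<dots> = mat_adjoint W * (B * E) * W" unfolding H ..
    also have "\<dots> = (mat_adjoint W * mat_adjoint Vr) * N * (Vr * E * W)"
      unfolding B_def using dims4 by (simp add: assoc')
    also have "\<dots> = N * Pi" unfolding adjVrW PiE[symmetric] using dims4 by (simp add: mult_one_l)
    finally show "mat_adjoint Pi * N = N * Pi" .
  qed
  show ?thesis
    unfolding Pi_def[symmetric] B_def[symmetric] E_def[symmetric]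
      northo_iff[OF Nc Nadj Pic] mid comm_E_iff[OF Bc, of nc, folded E_def] ..
qed

end
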